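(* In the multi-unit auction with unit demand (with $m$ units, $n$ bidders, $1\le m\le n-1$, types in $[L,U]$), no feasible anonymous Groves mechanism welfare dominates an OEL mechanism (of any index $k$).
   Context: Multi-unit auction with unit demand: $m$ identical units, $n\ge 2$ bidders, $1\le m\le n-1$, each bidder wants at most one unit; bidder $i$'s type $\theta_i\in\Theta_i=[L,U]$ ($L<U$) is her value for one unit, and $v_i=\theta_i$ if she gets a unit, $0$ otherwise. Efficient decisions allocate units to $m$ highest bidders. A Groves mechanism (efficient decision function $f$) has taxes $t_i(\theta)=\sum_{j\ne i}v_j(f(\theta),\theta_j)+h_i(\theta_{-i})$; player $i$'s utility is value plus $t_i$. It is anonymous if all $h_i$ equal one function $h$ symmetric in its $n-1$ arguments. The VCG (Clarke) mechanism uses $h_i(\theta_{-i})=-\max_d\sum_{j\ne i}v_j(d,\theta_j)$; here $\sum_i t_i^{VCG}(\theta)=-m[\theta]_{m+1}$, where $[x]_j$ denotes the $j$th highest entry of a vector $x$. A mechanism is feasible if $\sum_i t_i(\theta)\le 0$ for all $\theta$. Mechanism $t'$ welfare dominates $t$ (same decision function) if $\sum_i t_i(\theta)\le\sum_i t'_i(\theta)$ for all $\theta$ with strict inequality for some $\theta$. OEL mechanisms: $t_i(\theta)=t_i^{VCG}(\theta)+c_0+\sum_{j=1}^{n-1}c_j[\theta_{-i}]_j$, where for an index $k\in\{0,\dots,n\}$ with $k-m$ odd the constants are: writing $\alpha_i=(-1)^{m-i}\binom{n-i-1}{n-m-1}/\binom{m-1}{i-1}$ and $\beta_i=(-1)^{m-i-1}\binom{i-1}{m-1}/\binom{n-m-1}{n-i-1}$,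 • $k=0$: $c_i=\alpha_i$ for $i=1,\dots,m$; $c_0=Um/n-U\sum_{i=1}^m\alpha_i$; other $c_i=0$. • $1\le k\le m$: $c_i=\alpha_i$ for $i=k+1,\dots,m$; $c_k=m/n-\sum_{i=k+1}^m\alpha_i$; other $c_i=0$ (including $c_0$). • $m+1\le k\le n-1$: $c_i=\beta_i$ for $i=m+1,\dots,k-1$; $c_k=m/n-\sum_{i=m+1}^{k-1}\beta_i$; other $c_i=0$. • $k=n$: $c_i=\beta_i$ for $i=m+1,\dots,n-1$; $c_0=Lm/n-L\sum_{i=m+1}^{n-1}\beta_i$; other $c_i=0$. *)

theory Defs
  imports Complex_Main "HOL-Combinatorics.Permutations"
begin

text \<open>Bidders are indexed 0,...,n-1. A type profile is a function theta :: nat => real,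
  only the values at indices < n matter.\<close>

definition profiles :: "nat \<Rightarrow> real \<Rightarrow> real \<Rightarrow> (nat \<Rightarrow> real) set" where
  "profiles n L U = {\<theta>. \<forall>i<n. \<theta> i \<in> {L..U}}"

text \<open>A decision: the set of bidders receiving a unit (all m units allocated).\<close>
definition decisions :: "nat \<Rightarrow> nat \<Rightarrow> nat set set" where
  "decisions n m = {d. d \<subseteq> {0..<n} \<and> card d = m}"

definition val :: "nat set \<Rightarrow> nat \<Rightarrow> real \<Rightarrow> real" where
  "val d j x = (if j \<in> d then x else 0)"

definition efficient :: "nat \<Rightarrow> nat \<Rightarrow> real \<Rightarrow> real \<Rightarrow> ((nat \<Rightarrow> real) \<Rightarrow> nat set) \<Rightarrow> bool" where
  "efficient n m L U f \<longleftrightarrow> (\<forall>\<theta>\<in>profiles n L U. f \<theta> \<in> decisions n m \<and>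
      (\<forall>d\<in>decisions n m. (\<Sum>j<n. val d j (\<theta> j)) \<le> (\<Sum>j<n. val (f \<theta>) j (\<theta> j))))"

text \<open>theta_{-i}: the (n-1)-vector of the other types, indices 0..n-2 (entries beyond set to 0).\<close>
definition others :: "nat \<Rightarrow> nat \<Rightarrow> (nat \<Rightarrow> real) \<Rightarrow> (nat \<Rightarrow> real)" where
  "others n i \<theta> = (\<lambda>j. if j < i then \<theta> j else if j < n - 1 then \<theta> (Suc j) else 0)"

text \<open>[x]_j: the j-th highest entry (j >= 1) of the vector (x 0, ..., x (len-1)).\<close>
definition kth_largest :: "(nat \<Rightarrow> real) \<Rightarrow> nat \<Rightarrow> nat \<Rightarrow> real" where
  "kth_largest x len j = rev (sort (map x [0..<len])) ! (j - 1)"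

definition groves_tax ::
  "nat \<Rightarrow> ((nat \<Rightarrow> real) \<Rightarrow> nat set) \<Rightarrow> (nat \<Rightarrow> (nat \<Rightarrow> real) \<Rightarrow> real) \<Rightarrow> nat \<Rightarrow> (nat \<Rightarrow> real) \<Rightarrow> real" where
  "groves_tax n f h i \<theta> = (\<Sum>j\<in>{0..<n}-{i}. val (f \<theta>) j (\<theta> j)) + h i (others n i \<theta>)"

text \<open>Anonymous Groves mechanism: all h_i equal one symmetric function h of n-1 arguments.\<close>
definition symmetric_fn :: "nat \<Rightarrow> real \<Rightarrow> real \<Rightarrow> ((nat \<Rightarrow> real) \<Rightarrow> real) \<Rightarrow> bool" where
  "symmetric_fn n L U h \<longleftrightarrow> (\<forall>x. (\<forall>j<n-1. x j \<in> {L..U}) \<longrightarrow>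
      (\<forall>\<pi>. \<pi> permutes {0..<n-1} \<longrightarrow> h (x \<circ> \<pi>) = h x))"

definition vcg_tax :: "nat \<Rightarrow> nat \<Rightarrow> ((nat \<Rightarrow> real) \<Rightarrow> nat set) \<Rightarrow> nat \<Rightarrow> (nat \<Rightarrow> real) \<Rightarrow> real" where
  "vcg_tax n m f i \<theta> = (\<Sum>j\<in>{0..<n}-{i}. val (f \<theta>) j (\<theta> j))
      - Max ((\<lambda>d. \<Sum>j\<in>{0..<n}-{i}. val d j (\<theta> j)) ` {d \<in> decisions n m. i \<notin> d})"

definition alpha :: "nat \<Rightarrow> nat \<Rightarrow> nat \<Rightarrow> real" where
  "alpha n m i = (-1) ^ (m - i) * real ((n - i - 1) choose (n - m - 1)) / real ((m - 1) choose (i - 1))"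

text \<open>(-1)^(m-i-1) = (-1)^(i-m-1) for i >= m+1.\<close>
definition beta :: "nat \<Rightarrow> nat \<Rightarrow> nat \<Rightarrow> real" where
  "beta n m i = (-1) ^ (i - m - 1) * real ((i - 1) choose (m - 1)) / real ((n - m - 1) choose (n - i - 1))"

definition oel_c :: "nat \<Rightarrow> nat \<Rightarrow> real \<Rightarrow> real \<Rightarrow> nat \<Rightarrow> nat \<Rightarrow> real" where
  "oel_c n m L U k j =
    (if k = 0 then
       (if j = 0 then U * real m / real n - U * (\<Sum>i=1..m. alpha n m i)
        else if 1 \<le> j \<and> j \<le> m then alpha n m j else 0)
     else if k \<le> m then
       (if k + 1 \<le> j \<and> j \<le> m then alpha n m j
        else if j = k then real m / real n - (\<Sum>i=k+1..m. alpha n m i) else 0)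
     else if k \<le> n - 1 then
       (if m + 1 \<le> j \<and> j \<le> k - 1 then beta n m j
        else if j = k then real m / real n - (\<Sum>i=m+1..k-1. beta n m i) else 0)
     else
       (if m + 1 \<le> j \<and> j \<le> n - 1 then beta n m j
        else if j = 0 then L * real m / real n - L * (\<Sum>i=m+1..n-1. beta n m i) else 0))"

definition oel_tax :: "nat \<Rightarrow> nat \<Rightarrow> real \<Rightarrow> real \<Rightarrow> nat \<Rightarrow> ((nat \<Rightarrow> real) \<Rightarrow> nat set)
    \<Rightarrow> nat \<Rightarrow> (nat \<Rightarrow> real) \<Rightarrow> real" where
  "oel_tax n m L U k f i \<theta> = vcg_tax n m f i \<theta> + oel_c n m L U k 0
     + (\<Sum>j=1..n-1. oel_c n m L U k j * kth_largest (others n i \<theta>) (n - 1) j)"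

definition feasible :: "nat \<Rightarrow> real \<Rightarrow> real \<Rightarrow> (nat \<Rightarrow> (nat \<Rightarrow> real) \<Rightarrow> real) \<Rightarrow> bool" where
  "feasible n L U t \<longleftrightarrow> (\<forall>\<theta>\<in>profiles n L U. (\<Sum>i<n. t i \<theta>) \<le> 0)"

definition welfare_dominates ::
  "nat \<Rightarrow> real \<Rightarrow> real \<Rightarrow> (nat \<Rightarrow> (nat \<Rightarrow> real) \<Rightarrow> real) \<Rightarrow> (nat \<Rightarrow> (nat \<Rightarrow> real) \<Rightarrow> real) \<Rightarrow> bool" where
  "welfare_dominates n L U t' t \<longleftrightarrow>
     (\<forall>\<theta>\<in>profiles n L U. (\<Sum>i<n. t i \<theta>) \<le> (\<Sum>i<n. t' i \<theta>)) \<and>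
     (\<exists>\<theta>\<in>profiles n L U. (\<Sum>i<n. t i \<theta>) < (\<Sum>i<n. t' i \<theta>))"

end

theory Submission
  imports Defs
begin


definition KL :: "real list \<Rightarrow> nat \<Rightarrow> real" where
  "KL xs j = rev (sort xs) ! (j - 1)"

definition rem :: "nat \<Rightarrow> 'a list \<Rightarrow> 'a list" where
  "rem i xs = take i xs @ drop (Suc i) xs"

definition vec :: "real list \<Rightarrow> nat \<Rightarrow> real" where
  "vec xs = (\<lambda>j. if j < length xs then xs ! j else 0)"

lemma sort_mset_eq: "mset xs = mset ys \<Longrightarrow> sort xs = sort ys"
  by (metis properties_for_sort mset_sort sorted_sort)

lemma KL_mset: "mset xs = mset ys \<Longrightarrow> KL xs j = KL ys j"
  unfolding KL_def using sort_mset_eq by metis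

lemma length_rem: "i < length xs \<Longrightarrow> length (rem i xs) = length xs - 1"
  unfolding rem_def by simp

lemma mset_rem: "i < length xs \<Longrightarrow> mset (rem i xs) = mset xs - {#xs ! i#}"
proof -
  assume i: "i < length xs"
  have "xs = take i xs @ xs ! i # drop (Suc i) xs" using i by (simp add: id_take_nth_drop)
  then have "mset xs = mset (take i xs) + add_mset (xs ! i) (mset (drop (Suc i) xs))"
    by (metis mset.simps(2) mset_append)
  then show ?thesis unfolding rem_def by simp
qed

lemma rem_map: "rem i (map f xs) = map f (rem i xs)"
  unfolding rem_def by (simp add: take_map drop_map)

lemma rem_upt: "i < n \<Longrightarrow> rem i [0..<n] = [0..<i] @ [Suc i..<n]"
  unfolding rem_def by simp

lemma others_vec:
  assumes "i < n"
  shows "others n i \<theta> = vec (rem i (map \<theta> [0..<n]))"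
proof
  fix j
  show "others n i \<theta> j = vec (rem i (map \<theta> [0..<n])) j"
    using assms unfolding others_def vec_def rem_def
    by (auto simp: nth_append min_def)
qed

lemma map_vec: "map (vec xs) [0..<length xs] = xs"
  unfolding vec_def by (rule nth_equalityI) auto

lemma kth_largest_KL:
  assumes "i < n"
  shows "kth_largest (others n i \<theta>) (n - 1) j = KL (rem i (map \<theta> [0..<n])) j"
proof -
  have "map (others n i \<theta>) [0..<n-1] = rem i (map \<theta> [0..<n])"
    using map_vec[of "rem i (map \<theta> [0..<n])"] assms
    by (simp add: others_vec length_rem)
  then show ?thesis unfolding kth_largest_def KL_def by simp
qed



lemma len_filter_mset: "mset xs = mset ys \<Longrightarrow> length (filter P xs) = length (filter P ys)"
  by (metis mset_filter size_mset)

lemma len_filter_mono: "(\<And>x. P x \<Longrightarrow> Q x) \<Longrightarrow> length (filter P xs) \<le> length (filter Q xs)"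
  by (induction xs) auto

lemma KL_nth: "1 \<le> j \<Longrightarrow> j \<le> length xs \<Longrightarrow> KL xs j = sort xs ! (length xs - j)"
  unfolding KL_def by (simp add: rev_nth Suc_diff_le)

lemma KL_in: "1 \<le> j \<Longrightarrow> j \<le> length xs \<Longrightarrow> KL xs j \<in> set xs"
proof -
  assume j: "1 \<le> j" "j \<le> length xs"
  have "length xs - j < length (sort xs)" using j by simp
  then have "sort xs ! (length xs - j) \<in> set (sort xs)" by (rule nth_mem)
  then show ?thesis using KL_nth[OF j] by simp
qed

lemma KL_props:
  assumes j: "1 \<le> j" "j \<le> length xs"
  shows "length (filter (\<lambda>x. KL xs j < x) xs) < j \<and> j \<le> length (filter (\<lambda>x. KL xs j \<le> x) xs)"
proof -
  define s where "s = sort xs"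
  define N where "N = length xs"
  define q where "q = N - j"
  have ls: "length s = N" by (simp add: s_def N_def)
  have ss: "sorted s" by (simp add: s_def)
  have ms: "mset s = mset xs" by (simp add: s_def)
  have qN: "q < N" using j by (simp add: q_def N_def)
  have p: "KL xs j = s ! q" using KL_nth[OF j] by (simp add: s_def q_def N_def)
  have tk: "\<forall>x\<in>set (take (Suc q) s). x \<le> s ! q"
  proof
    fix x assume "x \<in> set (take (Suc q) s)"
    then obtain a where a: "a < length (take (Suc q) s)" "x = take (Suc q) s ! a"
      by (auto simp: in_set_conv_nth)
    then have "a \<le> q" "x = s ! a" by auto
    then show "x \<le> s ! q" using ss qN ls by (simp add: sorted_nth_mono)
  qed
  have dr: "\<forall>x\<in>set (drop q s). s ! q \<le> x"
  proof
    fix x assume "x \<in> set (drop q s)"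
    then obtain a where a: "a < length (drop q s)" "x = drop q s ! a"
      by (auto simp: in_set_conv_nth)
    then have "x = s ! (q + a)" "q + a < N" using qN ls by auto
    then show "s ! q \<le> x" using ss qN ls by (simp add: sorted_nth_mono)
  qed
  have s1: "s = take (Suc q) s @ drop (Suc q) s" by simp
  have "filter (\<lambda>x. s ! q < x) (take (Suc q) s) = []"
    using tk by (auto simp: filter_empty_conv)
  then have "length (filter (\<lambda>x. s ! q < x) s) = length (filter (\<lambda>x. s ! q < x) (drop (Suc q) s))"
    by (metis append_Nil filter_append s1)
  also have "\<dots> \<le> length (drop (Suc q) s)" by (rule length_filter_le)
  also have "\<dots> = j - 1" using ls j by (simp add: q_def N_def)
  finally have A: "length (filter (\<lambda>x. s ! q < x) s) < j" using j by simp
  have s2: "s = take q s @ drop q s" by simp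
  have "filter (\<lambda>x. s ! q \<le> x) (drop q s) = drop q s" using dr by simp
  then have "length (drop q s) \<le> length (filter (\<lambda>x. s ! q \<le> x) s)"
    by (metis filter_append length_append le_add2 s2)
  moreover have "length (drop q s) = j" using ls j by (simp add: q_def N_def)
  ultimately have B: "j \<le> length (filter (\<lambda>x. s ! q \<le> x) s)" by simp
  show ?thesis using A B p len_filter_mset[OF ms] by metis
qed

lemma KL_uniq:
  assumes j: "1 \<le> j" "j \<le> length xs"
    and a: "length (filter (\<lambda>x. v < x) xs) < j" and b: "j \<le> length (filter (\<lambda>x. v \<le> x) xs)"
  shows "KL xs j = v"
proof (rule ccontr)
  let ?w = "KL xs j"
  assume ne: "?w \<noteq> v"
  note P = KL_props[OF j]
  show False
  proof (cases "?w < v")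
    case True
    then have "length (filter (\<lambda>x. v \<le> x) xs) \<le> length (filter (\<lambda>x. ?w < x) xs)"
      by (intro len_filter_mono) auto
    then show False using P b by linarith
  next
    case False
    then have "v < ?w" using ne by simp
    then have "length (filter (\<lambda>x. ?w \<le> x) xs) \<le> length (filter (\<lambda>x. v < x) xs)"
      by (intro len_filter_mono) auto
    then show False using P a by linarith
  qed
qed



definition desc :: "real list \<Rightarrow> bool" where
  "desc zs = sorted_wrt (\<lambda>a b. b \<le> a) zs"

lemma desc_sort: "desc zs \<Longrightarrow> sort zs = rev zs"
  unfolding desc_def by (intro properties_for_sort) (auto simp: sorted_wrt_rev)

lemma KL_desc: "desc zs \<Longrightarrow> 1 \<le> j \<Longrightarrow> KL zs j = zs ! (j - 1)"
  unfolding KL_def by (simp add: desc_sort)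

lemma desc_rem: "desc zs \<Longrightarrow> desc (rem i zs)"
proof -
  assume d: "desc zs"
  have "zs = take i zs @ drop i zs" by simp
  then have "sorted_wrt (\<lambda>a b. b \<le> a) (take i zs @ drop i zs)" using d unfolding desc_def by simp
  note E = this[unfolded sorted_wrt_append]
  then have A: "sorted_wrt (\<lambda>a b. b \<le> a) (take i zs)" "sorted_wrt (\<lambda>a b. b \<le> a) (drop i zs)"
     "\<forall>x\<in>set (take i zs). \<forall>y\<in>set (drop i zs). y \<le> x"
    by blast+
  have "drop (Suc i) zs = drop 1 (drop i zs)" by simp
  then have B: "set (drop (Suc i) zs) \<subseteq> set (drop i zs)" by (metis set_drop_subset)
  have C: "sorted_wrt (\<lambda>a b. b \<le> a) (drop (Suc i) zs)" using d unfolding desc_def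
    by (simp add: sorted_wrt_drop)
  show ?thesis unfolding desc_def rem_def sorted_wrt_append using A B C by blast
qed

definition topm :: "nat \<Rightarrow> real list \<Rightarrow> real" where
  "topm m xs = (\<Sum>j=1..m. KL xs j)"

lemma topm_mset: "mset xs = mset ys \<Longrightarrow> topm m xs = topm m ys"
  unfolding topm_def by (intro sum.cong refl KL_mset)

lemma sum_le_top:
  fixes y :: "nat \<Rightarrow> real"
  assumes d: "d \<subseteq> {..<N}" "card d = m" and mono: "\<And>a b. a \<le> b \<Longrightarrow> b < N \<Longrightarrow> y b \<le> y a"
  shows "(\<Sum>t\<in>d. y t) \<le> (\<Sum>t<m. y t)"
proof (cases "m = 0")
  case True
  then have "d = {}" using d finite_subset by fastforce
  then show ?thesis using True by simp
next
  case False
  define M where "M = {..<m}"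
  have fd: "finite d" using d finite_subset by blast
  have c1: "card (d - M) = m - card (d \<inter> M)" using card_Diff_subset_Int[of d M] fd d
    by (simp add: M_def)
  have c2: "card (M - d) = m - card (d \<inter> M)" using card_Diff_subset_Int[of M d] fd
    by (simp add: M_def Int_commute)
  have "(\<Sum>t\<in>d. y t) = (\<Sum>t\<in>d - M. y t) + (\<Sum>t\<in>d \<inter> M. y t)"
    using sum.Int_Diff[OF fd, of y M] by simp
  moreover have "(\<Sum>t<m. y t) = (\<Sum>t\<in>M - d. y t) + (\<Sum>t\<in>d \<inter> M. y t)"
    using sum.Int_Diff[of M y d] by (simp add: M_def Int_commute)
  moreover have "(\<Sum>t\<in>d - M. y t) \<le> of_nat (card (d - M)) * y (m - 1)"
  proof (rule sum_bounded_above)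
    fix t assume "t \<in> d - M"
    then have "m - 1 \<le> t" "t < N" using d by (auto simp: M_def)
    then show "y t \<le> y (m - 1)" using mono by blast
  qed
  moreover have "of_nat (card (M - d)) * y (m - 1) \<le> (\<Sum>t\<in>M - d. y t)"
  proof (rule sum_bounded_below)
    fix t assume t: "t \<in> M - d"
    have "m \<le> N" using d card_mono[of "{..<N}" d] by auto
    then have "t \<le> m - 1" "m - 1 < N" using t False by (auto simp: M_def)
    then show "y (m - 1) \<le> y t" using mono by blast
  qed
  moreover have "of_nat (card (d - M)) * y (m - 1) = of_nat (card (M - d)) * y (m - 1)" using c1 c2 by simp
  ultimately show ?thesis by linarith
qed

lemma TOP:
  fixes x :: "nat \<Rightarrow> real"
  assumes dis: "distinct is0" and S: "set is0 = S" and m: "m \<le> length is0"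
  shows "\<forall>d. d \<subseteq> S \<and> card d = m \<longrightarrow> (\<Sum>j\<in>d. x j) \<le> topm m (map x is0)"
    and "\<exists>d. d \<subseteq> S \<and> card d = m \<and> (\<Sum>j\<in>d. x j) = topm m (map x is0)"
proof -
  define js where "js = sort_key (\<lambda>j. - x j) is0"
  define N where "N = length is0"
  have mi: "mset js = mset is0" by (simp add: js_def)
  have di: "distinct js" using dis by (simp add: js_def)
  have si: "set js = S" using S by (metis mi set_mset_mset)
  have li: "length js = N" by (simp add: js_def N_def)
  have "sorted (map (\<lambda>j. - x j) js)" by (simp add: js_def)
  then have dz: "desc (map x js)" unfolding desc_def by (simp add: sorted_wrt_map)
  have "mset (map x js) = mset (map x is0)" using mi by (metis mset_map)
  then have "topm m (map x is0) = topm m (map x js)" using topm_mset by metis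
  also have "\<dots> = (\<Sum>j=1..m. x (js ! (j - 1)))"
    unfolding topm_def using KL_desc[OF dz] m li N_def by (intro sum.cong) auto
  also have "\<dots> = (\<Sum>t<m. x (js ! t))" by (simp add: sum.atLeast1_atMost_eq)
  finally have T: "topm m (map x is0) = (\<Sum>t<m. x (js ! t))" .
  have inj: "inj_on (nth js) {..<N}" using di li by (simp add: inj_on_nth)
  have mono: "\<And>a b. a \<le> b \<Longrightarrow> b < N \<Longrightarrow> x (js ! b) \<le> x (js ! a)"
    using dz li unfolding desc_def by (auto simp: sorted_wrt_iff_nth_less le_less)
  show "\<forall>d. d \<subseteq> S \<and> card d = m \<longrightarrow> (\<Sum>j\<in>d. x j) \<le> topm m (map x is0)"
  proof (intro allI impI)
    fix d assume d: "d \<subseteq> S \<and> card d = m"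
    define d' where "d' = {t. t < N \<and> js ! t \<in> d}"
    have img: "nth js ` d' = d"
    proof
      show "nth js ` d' \<subseteq> d" by (auto simp: d'_def)
      show "d \<subseteq> nth js ` d'"
      proof
        fix j assume "j \<in> d"
        then have "j \<in> set js" using d si by auto
        then obtain t where "t < N" "js ! t = j" using li by (auto simp: in_set_conv_nth)
        then show "j \<in> nth js ` d'" using \<open>j \<in> d\<close> by (auto simp: d'_def)
      qed
    qed
    have inj': "inj_on (nth js) d'" using inj by (rule inj_on_subset) (auto simp: d'_def)
    have "(\<Sum>j\<in>d. x j) = (\<Sum>t\<in>d'. x (js ! t))"
      using sum.reindex[OF inj', of x] img by simp
    also have "\<dots> \<le> (\<Sum>t<m. x (js ! t))"
    proof (rule sum_le_top[where N=N])
      show "d' \<subseteq> {..<N}" by (auto simp: d'_def)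
      show "card d' = m" using card_image[OF inj'] img d by simp
    qed (rule mono)
    finally show "(\<Sum>j\<in>d. x j) \<le> topm m (map x is0)" using T by simp
  qed
  show "\<exists>d. d \<subseteq> S \<and> card d = m \<and> (\<Sum>j\<in>d. x j) = topm m (map x is0)"
  proof (intro exI conjI)
    have inj'': "inj_on (nth js) {..<m}" using inj by (rule inj_on_subset) (use m N_def in auto)
    show "nth js ` {..<m} \<subseteq> S" using si li m N_def by auto
    show "card (nth js ` {..<m}) = m" using card_image[OF inj''] by simp
    show "(\<Sum>j\<in>nth js ` {..<m}. x j) = topm m (map x is0)"
      using sum.reindex[OF inj'', of x] T by simp
  qed
qed



lemma binom_step: "Suc k * (M choose Suc k) = (M - k) * (M choose k)"
  using times_binomial_minus1_eq[of "Suc k" M] binomial_absorb_comp[of M k] by simp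

lemma alpha_m: "1 \<le> m \<Longrightarrow> m \<le> n - 1 \<Longrightarrow> alpha n m m = 1"
  unfolding alpha_def by simp

lemma alpha_rec:
  assumes j: "2 \<le> j" "j \<le> m" and mn: "m \<le> n - 1"
  shows "real (j - 1) * alpha n m (j - 1) + real (n - j) * alpha n m j = 0"
proof -
  define K where "K = n - m - 1"
  define s :: real where "s = (-1) ^ (m - j)"
  have s1: "(-1::real) ^ (m - (j - 1)) = - s"
  proof -
    have "m - (j - 1) = Suc (m - j)" using j by simp
    then show ?thesis by (simp add: s_def)
  qed
  define A where "A = real ((n - j) choose K)"
  define C where "C = real ((n - j - 1) choose K)"
  define B1 where "B1 = real ((m - 1) choose (j - 2))"
  define B2 where "B2 = real ((m - 1) choose (j - 1))"
  have B1p: "B1 > 0" using j unfolding B1_def by simp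
  have B2p: "B2 > 0" using j unfolding B2_def by simp
  have N1: "(n - j) * ((n - j - 1) choose K) = (m - j + 1) * ((n - j) choose K)"
  proof -
    have "(n - j - K) * ((n - j) choose K) = (n - j) * ((n - j - 1) choose K)"
      by (rule binomial_absorb_comp)
    moreover have "n - j - K = m - j + 1" using j mn by (simp add: K_def)
    ultimately show ?thesis by simp
  qed
  have N2: "(j - 1) * ((m - 1) choose (j - 1)) = (m - j + 1) * ((m - 1) choose (j - 2))"
  proof -
    define t where "t = j - 2"
    have t: "j = Suc (Suc t)" using j by (simp add: t_def)
    have "Suc t * ((m - 1) choose Suc t) = (m - 1 - t) * ((m - 1) choose t)" by (rule binom_step)
    moreover have "m - 1 - t = m - j + 1" using j t by simp
    ultimately show ?thesis using t by simp
  qed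
  have R1: "real (n - j) * C = real (m - j + 1) * A" unfolding A_def C_def
    by (simp only: of_nat_mult[symmetric] N1)
  have R2: "real (j - 1) * B2 = real (m - j + 1) * B1" unfolding B1_def B2_def
    by (simp only: of_nat_mult[symmetric] N2)
  have a1: "alpha n m (j - 1) = - s * A / B1"
  proof -
    have i1: "n - (j - 1) - 1 = n - j" "j - 1 - 1 = j - 2" using j mn by auto
    show ?thesis unfolding alpha_def A_def B1_def K_def by (simp only: i1 s1)
  qed
  have a2: "alpha n m j = s * C / B2"
    unfolding alpha_def C_def B2_def K_def s_def by (rule refl)
  have "real (j - 1) * alpha n m (j - 1) + real (n - j) * alpha n m j
      = s * (real (n - j) * C * B1 - real (j - 1) * B2 * A) / (B1 * B2)"
    unfolding a1 a2 using B1p B2p by (simp add: field_simps)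
  also have "\<dots> = 0"
  proof -
    have "real (n - j) * C * B1 = real (m - j + 1) * A * B1" by (simp only: R1)
    moreover have "real (j - 1) * B2 * A = real (m - j + 1) * B1 * A" by (simp only: R2)
    ultimately have "real (n - j) * C * B1 - real (j - 1) * B2 * A = real (m - j + 1) * A * B1 - real (m - j + 1) * B1 * A" by (simp only:)
    also have "\<dots> = 0" by (simp add: mult_ac)
    finally have "real (n - j) * C * B1 - real (j - 1) * B2 * A = 0" .
    then show ?thesis by simp
  qed
  finally show ?thesis .
qed

lemma beta_first:
  assumes "1 \<le> m" "m + 1 \<le> n - 1"
  shows "real (n - m - 1) * beta n m (m + 1) = real m"
proof -
  have a: "(n - m - 1) choose (n - (m + 1) - 1) = n - m - 1"
  proof -
    have "n - m - 1 = Suc (n - m - 2)" "n - (m + 1) - 1 = n - m - 2" using assms by auto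
    then show ?thesis by simp
  qed
  have b: "m choose (m - 1) = m"
  proof -
    have "m choose (m - 1) = m choose (m - (m - 1))" by (rule binomial_symmetric) simp
    moreover have "m - (m - 1) = 1" using assms by simp
    ultimately show ?thesis by simp
  qed
  have pos: "n - m - 1 > 0" using assms by simp
  show ?thesis unfolding beta_def using a b pos by simp
qed

lemma beta_rec:
  assumes b: "m + 1 \<le> b" "b + 1 \<le> n - 1" and m: "1 \<le> m"
  shows "real b * beta n m b + real (n - b - 1) * beta n m (b + 1) = 0"
proof -
  define M where "M = n - m - 1"
  define s :: real where "s = (-1) ^ (b - m - 1)"
  have s1: "(-1::real) ^ (b + 1 - m - 1) = - s"
  proof -
    have "b + 1 - m - 1 = Suc (b - m - 1)" using b by simp
    then show ?thesis by (simp add: s_def)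
  qed
  define A where "A = real ((b - 1) choose (m - 1))"
  define C where "C = real (b choose (m - 1))"
  define D1 where "D1 = real (M choose (n - b - 1))"
  define D2 where "D2 = real (M choose (n - b - 2))"
  have D1p: "D1 > 0" using b unfolding D1_def M_def by simp
  have D2p: "D2 > 0" using b unfolding D2_def M_def by simp
  have N3: "b * ((b - 1) choose (m - 1)) = (b - m + 1) * (b choose (m - 1))"
  proof -
    have e1: "(b - (m - 1)) * (b choose (m - 1)) = b * ((b - 1) choose (m - 1))"
      by (rule binomial_absorb_comp)
    have e2: "b - (m - 1) = b - m + 1" using b m by simp
    from e1 have "(b - m + 1) * (b choose (m - 1)) = b * ((b - 1) choose (m - 1))" by (simp only: e2)
    then show ?thesis by (rule sym)
  qed
  have N4: "(n - b - 1) * (M choose (n - b - 1)) = (b - m + 1) * (M choose (n - b - 2))"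
  proof -
    define t where "t = n - b - 2"
    have t: "n - b - 1 = Suc t" using b by (simp add: t_def)
    have "Suc t * (M choose Suc t) = (M - t) * (M choose t)" by (rule binom_step)
    moreover have "M - t = b - m + 1" "n - b - 2 = t" using b t by (auto simp: M_def)
    ultimately show ?thesis using t by simp
  qed
  have R1: "real b * A = real (b - m + 1) * C" unfolding A_def C_def
    by (simp only: of_nat_mult[symmetric] N3)
  have R2: "real (n - b - 1) * D1 = real (b - m + 1) * D2" unfolding D1_def D2_def
    by (simp only: of_nat_mult[symmetric] N4)
  have a1: "beta n m b = s * A / D1"
    unfolding beta_def A_def D1_def M_def s_def by (rule refl)
  have a2: "beta n m (b + 1) = - s * C / D2"
  proof -
    have i1: "b + 1 - 1 = b" "n - (b + 1) - 1 = n - b - 2" by auto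
    show ?thesis unfolding beta_def C_def D2_def M_def by (simp only: i1 s1)
  qed
  have "real b * beta n m b + real (n - b - 1) * beta n m (b + 1)
      = s * (real b * A * D2 - real (n - b - 1) * D1 * C) / (D1 * D2)"
    unfolding a1 a2 using D1p D2p by (simp add: field_simps)
  also have "\<dots> = 0"
  proof -
    have "real b * A * D2 = real (b - m + 1) * C * D2" by (simp only: R1)
    moreover have "real (n - b - 1) * D1 * C = real (b - m + 1) * D2 * C" by (simp only: R2)
    ultimately have "real b * A * D2 - real (n - b - 1) * D1 * C = real (b - m + 1) * C * D2 - real (b - m + 1) * D2 * C" by (simp only:)
    also have "\<dots> = 0" by (simp add: mult_ac)
    finally have "real b * A * D2 - real (n - b - 1) * D1 * C = 0" .
    then show ?thesis by simp
  qed
  finally show ?thesis .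
qed



definition aterm :: "nat \<Rightarrow> (nat \<Rightarrow> real) \<Rightarrow> nat \<Rightarrow> real" where
  "aterm n z j = (real n - real j) * z (j - 1) + real j * z j"

lemma telescope:
  "(real n - 1) * (\<Sum>j=1..M. z (j - 1)) - (\<Sum>j=1..M. aterm n z j) = - real M * z M"
proof (induction M)
  case 0
  then show ?case by simp
next
  case (Suc M)
  have "(real n - 1) * (\<Sum>j=1..Suc M. z (j - 1)) - (\<Sum>j=1..Suc M. aterm n z j)
      = ((real n - 1) * (\<Sum>j=1..M. z (j - 1)) - (\<Sum>j=1..M. aterm n z j))
        + (real n - 1) * z M - aterm n z (Suc M)"
    by (simp add: algebra_simps)
  also have "\<dots> = - real M * z M + (real n - 1) * z M - aterm n z (Suc M)"
    by (simp only: Suc.IH)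
  also have "\<dots> = - real (Suc M) * z (Suc M)"
    unfolding aterm_def by (simp add: algebra_simps)
  finally show ?case .
qed

lemma alpha_rec':
  assumes "1 \<le> a" "a < m" "m \<le> n - 1"
  shows "real a * alpha n m a + (real n - real a - 1) * alpha n m (a + 1) = 0"
proof -
  have "real (a + 1 - 1) * alpha n m (a + 1 - 1) + real (n - (a + 1)) * alpha n m (a + 1) = 0"
    using assms by (intro alpha_rec) auto
  moreover have "real (n - (a + 1)) = real n - real a - 1" using assms by (simp add: of_nat_diff)
  ultimately show ?thesis by (simp add: algebra_simps)
qed

lemma alpha_sum:
  assumes "1 \<le> a" "a \<le> m" "m \<le> n - 1"
  shows "(\<Sum>j=a..m. alpha n m j * aterm n z j) - real m * z m = (real n - real a) * alpha n m a * z (a - 1)"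
    and "real n * (\<Sum>j=a..m. alpha n m j) = real m + (real n - real a) * alpha n m a"
proof -
  have "\<forall>a. m - a = d \<longrightarrow> 1 \<le> a \<longrightarrow> a \<le> m \<longrightarrow>
    ((\<Sum>j=a..m. alpha n m j * aterm n z j) - real m * z m = (real n - real a) * alpha n m a * z (a - 1)
    \<and> real n * (\<Sum>j=a..m. alpha n m j) = real m + (real n - real a) * alpha n m a)" for d
  proof (induction d)
    case 0
    show ?case
    proof (intro allI impI)
      fix a assume h: "m - a = 0" "1 \<le> a" "a \<le> m"
      then have am: "a = m" by simp
      have al: "alpha n m m = 1" using h assms by (intro alpha_m) auto
      show "(\<Sum>j=a..m. alpha n m j * aterm n z j) - real m * z m = (real n - real a) * alpha n m a * z (a - 1)
        \<and> real n * (\<Sum>j=a..m. alpha n m j) = real m + (real n - real a) * alpha n m a"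
        using al unfolding am aterm_def by (simp add: algebra_simps)
    qed
  next
    case (Suc d)
    show ?case
    proof (intro allI impI)
      fix a assume h: "m - a = Suc d" "1 \<le> a" "a \<le> m"
      then have am: "a < m" by simp
      have IH: "(\<Sum>j=a+1..m. alpha n m j * aterm n z j) - real m * z m = (real n - real (a+1)) * alpha n m (a+1) * z a"
          "real n * (\<Sum>j=a+1..m. alpha n m j) = real m + (real n - real (a+1)) * alpha n m (a+1)"
        using Suc.IH[rule_format, of "a+1"] h am by auto
      have rec: "real a * alpha n m a + (real n - real a - 1) * alpha n m (a + 1) = 0"
        using h am assms by (intro alpha_rec') auto
      have s1: "(\<Sum>j=a..m. alpha n m j * aterm n z j) = alpha n m a * aterm n z a + (\<Sum>j=a+1..m. alpha n m j * aterm n z j)"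
        using am by (simp add: sum.atLeast_Suc_atMost)
      have s2: "(\<Sum>j=a..m. alpha n m j) = alpha n m a + (\<Sum>j=a+1..m. alpha n m j)"
        using am by (simp add: sum.atLeast_Suc_atMost)
      have e1: "(\<Sum>j=a..m. alpha n m j * aterm n z j) - real m * z m = (real n - real a) * alpha n m a * z (a - 1)
          + (real a * alpha n m a + (real n - real a - 1) * alpha n m (a + 1)) * z a"
      proof -
        have "(\<Sum>j=a..m. alpha n m j * aterm n z j) - real m * z m
            = alpha n m a * aterm n z a + ((\<Sum>j=a+1..m. alpha n m j * aterm n z j) - real m * z m)"
          unfolding s1 by simp
        also have "\<dots> = alpha n m a * aterm n z a + (real n - real (a+1)) * alpha n m (a+1) * z a"
          by (simp only: IH(1))
        also have "\<dots> = (real n - real a) * alpha n m a * z (a - 1)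
          + (real a * alpha n m a + (real n - real a - 1) * alpha n m (a + 1)) * z a"
          by (simp add: aterm_def algebra_simps)
        finally show ?thesis .
      qed
      have e2: "real n * (\<Sum>j=a..m. alpha n m j) = real m + (real n - real a) * alpha n m a
          + (real a * alpha n m a + (real n - real a - 1) * alpha n m (a + 1))"
      proof -
        have "real n * (\<Sum>j=a..m. alpha n m j) = real n * alpha n m a + real n * (\<Sum>j=a+1..m. alpha n m j)"
          unfolding s2 by (simp add: algebra_simps)
        also have "\<dots> = real n * alpha n m a + (real m + (real n - real (a+1)) * alpha n m (a+1))"
          by (simp only: IH(2))
        also have "\<dots> = real m + (real n - real a) * alpha n m a
          + (real a * alpha n m a + (real n - real a - 1) * alpha n m (a + 1))"
          by (simp add: algebra_simps)
        finally show ?thesis .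
      qed
      show "(\<Sum>j=a..m. alpha n m j * aterm n z j) - real m * z m = (real n - real a) * alpha n m a * z (a - 1)
        \<and> real n * (\<Sum>j=a..m. alpha n m j) = real m + (real n - real a) * alpha n m a"
        using e1 e2 rec by simp
    qed
  qed
  then show "(\<Sum>j=a..m. alpha n m j * aterm n z j) - real m * z m = (real n - real a) * alpha n m a * z (a - 1)"
    and "real n * (\<Sum>j=a..m. alpha n m j) = real m + (real n - real a) * alpha n m a"
    using assms by auto
qed

lemma beta_rec':
  assumes "m + 1 \<le> b" "b + 1 \<le> n - 1" "1 \<le> m"
  shows "real b * beta n m b + (real n - real b - 1) * beta n m (b + 1) = 0"
proof -
  have "real (n - b - 1) = real n - real b - 1" using assms by (simp add: of_nat_diff)
  then show ?thesis using beta_rec[OF assms] by simp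
qed

lemma beta_first':
  assumes "1 \<le> m" "m + 1 \<le> n - 1"
  shows "(real n - real m - 1) * beta n m (m + 1) = real m"
proof -
  have "real (n - m - 1) = real n - real m - 1" using assms by (simp add: of_nat_diff)
  then show ?thesis using beta_first[OF assms] by simp
qed

lemma beta_sum:
  assumes "1 \<le> m" "m + 1 \<le> b" "b \<le> n - 1"
  shows "- real m * z m + (\<Sum>j=m+1..b. beta n m j * aterm n z j) = real b * beta n m b * z b"
    and "real n * (\<Sum>j=m+1..b. beta n m j) = real m + real b * beta n m b"
proof -
  have "\<forall>b. b = m + 1 + d \<longrightarrow> b \<le> n - 1 \<longrightarrow>
     (- real m * z m + (\<Sum>j=m+1..b. beta n m j * aterm n z j) = real b * beta n m b * z b
      \<and> real n * (\<Sum>j=m+1..b. beta n m j) = real m + real b * beta n m b)" for d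
  proof (induction d)
    case 0
    show ?case
    proof (intro allI impI)
      fix b assume h: "b = m + 1 + 0" "b \<le> n - 1"
      have bf: "(real n - real m - 1) * beta n m (m + 1) = real m" using h assms by (intro beta_first') auto
      show "- real m * z m + (\<Sum>j=m+1..b. beta n m j * aterm n z j) = real b * beta n m b * z b
      \<and> real n * (\<Sum>j=m+1..b. beta n m j) = real m + real b * beta n m b"
      proof
        have X: "beta n m (m + 1) * ((real n - real (m + 1)) * z m) = ((real n - real m - 1) * beta n m (m + 1)) * z m"
          by (simp add: algebra_simps)
        also have "\<dots> = real m * z m" by (simp only: bf)
        finally have X': "beta n m (m + 1) * ((real n - real (m + 1)) * z m) = real m * z m" .
        have "- real m * z m + (\<Sum>j=m+1..b. beta n m j * aterm n z j) = - real m * z m + beta n m (m+1) * ((real n - real (m + 1)) * z m + real (m+1) * z (m+1))"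
          unfolding h aterm_def by simp
        also have "\<dots> = - real m * z m + beta n m (m + 1) * ((real n - real (m + 1)) * z m) + beta n m (m+1) * real (m+1) * z (m+1)"
          by (simp add: algebra_simps)
        also have "\<dots> = real b * beta n m b * z b" unfolding X' h by simp
        finally show "- real m * z m + (\<Sum>j=m+1..b. beta n m j * aterm n z j) = real b * beta n m b * z b" .
        show "real n * (\<Sum>j=m+1..b. beta n m j) = real m + real b * beta n m b"
          using bf unfolding h by (simp add: algebra_simps)
      qed
    qed
  next
    case (Suc d)
    show ?case
    proof (intro allI impI)
      fix b assume h: "b = m + 1 + Suc d" "b \<le> n - 1"
      define c where "c = m + 1 + d"
      have bc: "b = c + 1" using h by (simp add: c_def)
      have IH: "- real m * z m + (\<Sum>j=m+1..c. beta n m j * aterm n z j) = real c * beta n m c * z c"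
          "real n * (\<Sum>j=m+1..c. beta n m j) = real m + real c * beta n m c"
        using Suc.IH[rule_format, of c] h by (auto simp: c_def)
      have rec: "real c * beta n m c + (real n - real c - 1) * beta n m (c + 1) = 0"
        using h assms by (intro beta_rec') (auto simp: c_def)
      have s1: "(\<Sum>j=m+1..b. beta n m j * aterm n z j) = (\<Sum>j=m+1..c. beta n m j * aterm n z j) + beta n m b * aterm n z b"
        unfolding bc c_def by simp
      have s2: "(\<Sum>j=m+1..b. beta n m j) = (\<Sum>j=m+1..c. beta n m j) + beta n m b"
        unfolding bc c_def by simp
      have e1: "- real m * z m + (\<Sum>j=m+1..b. beta n m j * aterm n z j) = real b * beta n m b * z b
          + (real c * beta n m c + (real n - real c - 1) * beta n m (c + 1)) * z c"
      proof -
        have "- real m * z m + (\<Sum>j=m+1..b. beta n m j * aterm n z j)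
          = (- real m * z m + (\<Sum>j=m+1..c. beta n m j * aterm n z j)) + beta n m b * aterm n z b"
          unfolding s1 by simp
        also have "\<dots> = real c * beta n m c * z c + beta n m b * aterm n z b"
          by (simp only: IH(1))
        also have "\<dots> = real b * beta n m b * z b
          + (real c * beta n m c + (real n - real c - 1) * beta n m (c + 1)) * z c"
          unfolding bc by (simp add: aterm_def algebra_simps)
        finally show ?thesis .
      qed
      have e2: "real n * (\<Sum>j=m+1..b. beta n m j) = real m + real b * beta n m b
          + (real c * beta n m c + (real n - real c - 1) * beta n m (c + 1))"
      proof -
        have "real n * (\<Sum>j=m+1..b. beta n m j) = real n * (\<Sum>j=m+1..c. beta n m j) + real n * beta n m b"
          unfolding s2 by (simp add: algebra_simps)
        also have "\<dots> = (real m + real c * beta n m c) + real n * beta n m b"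
          by (simp only: IH(2))
        also have "\<dots> = real m + real b * beta n m b
          + (real c * beta n m c + (real n - real c - 1) * beta n m (c + 1))"
          unfolding bc by (simp add: algebra_simps)
        finally show ?thesis .
      qed
      show "- real m * z m + (\<Sum>j=m+1..b. beta n m j * aterm n z j) = real b * beta n m b * z b
      \<and> real n * (\<Sum>j=m+1..b. beta n m j) = real m + real b * beta n m b"
        using e1 e2 rec by simp
    qed
  qed
  then show "- real m * z m + (\<Sum>j=m+1..b. beta n m j * aterm n z j) = real b * beta n m b * z b"
    and "real n * (\<Sum>j=m+1..b. beta n m j) = real m + real b * beta n m b"
    using assms by (auto dest: spec[of _ b] simp: le_iff_add)
qed



lemma alpha_PQ:
  assumes "1 \<le> a" "a \<le> m + 1" "m \<le> n - 1"
  shows "(\<Sum>j=a..m. alpha n m j * aterm n z j) - real m * z m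
       = (real n * (\<Sum>j=a..m. alpha n m j) - real m) * z (a - 1)"
proof (cases "a \<le> m")
  case True
  note A1 = alpha_sum(1)[OF assms(1) True assms(3), of z]
  note A2 = alpha_sum(2)[OF assms(1) True assms(3)]
  show ?thesis unfolding A1 A2 by simp
next
  case False
  then have "a = m + 1" using assms by simp
  then show ?thesis by simp
qed

lemma beta_PQ:
  assumes "1 \<le> m" "m \<le> b" "b \<le> n - 1"
  shows "- real m * z m + (\<Sum>j=m+1..b. beta n m j * aterm n z j)
       = (real n * (\<Sum>j=m+1..b. beta n m j) - real m) * z b"
proof (cases "m + 1 \<le> b")
  case True
  note B1 = beta_sum(1)[OF assms(1) True assms(3), of z]
  note B2 = beta_sum(2)[OF assms(1) True assms(3)]
  show ?thesis unfolding B1 B2 by simp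
next
  case False
  then have "b = m" using assms by simp
  then show ?thesis by simp
qed

lemma sum_split_ivl:
  fixes a b c :: nat
  assumes "a \<le> b + 1" "b \<le> c"
  shows "(\<Sum>j=a..c. f j) = (\<Sum>j=a..b. f j) + (\<Sum>j=b+1..c. (f j :: real))"
proof -
  have "{a..c} = {a..b} \<union> {b+1..c}" 
  proof (intro set_eqI)
    fix x show "x \<in> {a..c} \<longleftrightarrow> x \<in> {a..b} \<union> {b+1..c}" using assms by auto
  qed
  moreover have "{a..b} \<inter> {b+1..c} = {}" by auto
  ultimately show ?thesis by (simp add: sum.union_disjoint)
qed

lemma sum_zero_ivl: "(\<And>j. a \<le> j \<Longrightarrow> j \<le> b \<Longrightarrow> f j = 0) \<Longrightarrow> (\<Sum>j=a..b. f j) = (0::real)"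
  by (intro sum.neutral) auto

text \<open>The budget-balance identity on the zero set.\<close>
lemma S_zero_core:
  fixes z :: "nat \<Rightarrow> real"
  assumes n: "n \<ge> 2" and m: "1 \<le> m" "m \<le> n - 1" and k: "k \<le> n"
    and Z: "(k = 0 \<longrightarrow> z 0 = U) \<and> (k = n \<longrightarrow> z (n - 1) = L) \<and> (1 \<le> k \<and> k \<le> n - 1 \<longrightarrow> z (k - 1) = z k)"
  shows "- real m * z m + real n * oel_c n m L U k 0 + (\<Sum>j=1..n-1. oel_c n m L U k j * aterm n z j) = 0"
proof -
  have npos: "real n > 0" using n by simp
  consider (k0) "k = 0" | (k1) "1 \<le> k" "k \<le> m" | (k2) "m + 1 \<le> k" "k \<le> n - 1" | (kn) "k = n"
    using k m by linarith
  then show ?thesis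
  proof cases
    case k0
    define Q where "Q = real n * (\<Sum>j=1..m. alpha n m j) - real m"
    have P: "(\<Sum>j=1..m. alpha n m j * aterm n z j) - real m * z m = Q * z 0"
      using alpha_PQ[of 1 m n z] m unfolding Q_def by simp
    have s: "(\<Sum>j=1..n-1. oel_c n m L U k j * aterm n z j) = (\<Sum>j=1..m. alpha n m j * aterm n z j)"
    proof -
      have "(\<Sum>j=1..n-1. oel_c n m L U k j * aterm n z j) = (\<Sum>j=1..m. oel_c n m L U k j * aterm n z j)
         + (\<Sum>j=m+1..n-1. oel_c n m L U k j * aterm n z j)"
        using m by (intro sum_split_ivl) auto
      also have "(\<Sum>j=m+1..n-1. oel_c n m L U k j * aterm n z j) = 0"
        by (rule sum_zero_ivl) (simp add: oel_c_def k0)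
      also have "(\<Sum>j=1..m. oel_c n m L U k j * aterm n z j) = (\<Sum>j=1..m. alpha n m j * aterm n z j)"
        by (intro sum.cong) (auto simp: oel_c_def k0)
      finally show ?thesis by simp
    qed
    have c0: "real n * oel_c n m L U k 0 = - U * Q"
      unfolding oel_c_def Q_def using k0 npos by (simp add: field_simps)
    have "- real m * z m + real n * oel_c n m L U k 0 + (\<Sum>j=1..n-1. oel_c n m L U k j * aterm n z j)
        = real n * oel_c n m L U k 0 + ((\<Sum>j=1..m. alpha n m j * aterm n z j) - real m * z m)"
      unfolding s by simp
    also have "\<dots> = Q * (z 0 - U)" unfolding P c0 by (simp add: algebra_simps)
    finally show ?thesis using Z k0 by simp
  next
    case k1
    define Q where "Q = real n * (\<Sum>j=k+1..m. alpha n m j) - real m"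
    have P: "(\<Sum>j=k+1..m. alpha n m j * aterm n z j) - real m * z m = Q * z k"
      using alpha_PQ[of "k+1" m n z] m k1 unfolding Q_def by simp
    have s: "(\<Sum>j=1..n-1. oel_c n m L U k j * aterm n z j)
        = oel_c n m L U k k * aterm n z k + (\<Sum>j=k+1..m. alpha n m j * aterm n z j)"
    proof -
      have "(\<Sum>j=1..n-1. oel_c n m L U k j * aterm n z j) = (\<Sum>j=1..m. oel_c n m L U k j * aterm n z j)
         + (\<Sum>j=m+1..n-1. oel_c n m L U k j * aterm n z j)"
        using m by (intro sum_split_ivl) auto
      also have "(\<Sum>j=m+1..n-1. oel_c n m L U k j * aterm n z j) = 0"
        by (rule sum_zero_ivl) (use k1 in \<open>simp add: oel_c_def\<close>)
      also have "(\<Sum>j=1..m. oel_c n m L U k j * aterm n z j) = (\<Sum>j=1..k-1. oel_c n m L U k j * aterm n z j)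
         + (\<Sum>j=k-1+1..m. oel_c n m L U k j * aterm n z j)"
        using k1 by (intro sum_split_ivl) auto
      also have "(\<Sum>j=1..k-1. oel_c n m L U k j * aterm n z j) = 0"
        by (rule sum_zero_ivl) (use k1 in \<open>auto simp add: oel_c_def\<close>)
      also have "(\<Sum>j=k-1+1..m. oel_c n m L U k j * aterm n z j)
          = oel_c n m L U k k * aterm n z k + (\<Sum>j=k+1..m. oel_c n m L U k j * aterm n z j)"
        using k1 by (simp add: sum.atLeast_Suc_atMost)
      also have "(\<Sum>j=k+1..m. oel_c n m L U k j * aterm n z j) = (\<Sum>j=k+1..m. alpha n m j * aterm n z j)"
        by (intro sum.cong) (use k1 in \<open>auto simp: oel_c_def\<close>)
      finally show ?thesis by simp
    qed
    have ck: "oel_c n m L U k k = - Q / real n"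
      unfolding oel_c_def Q_def using k1 npos by (simp add: field_simps)
    have "- real m * z m + real n * oel_c n m L U k 0 + (\<Sum>j=1..n-1. oel_c n m L U k j * aterm n z j)
        = oel_c n m L U k k * aterm n z k + ((\<Sum>j=k+1..m. alpha n m j * aterm n z j) - real m * z m)"
      unfolding s using k1 by (simp add: oel_c_def)
    also have "\<dots> = - Q / real n * ((real n - real k) * (z (k - 1) - z k))"
      unfolding P ck using npos by (simp add: aterm_def field_simps)
    finally show ?thesis using Z k1 m by simp
  next
    case k2
    define Q where "Q = real n * (\<Sum>j=m+1..k-1. beta n m j) - real m"
    have P: "- real m * z m + (\<Sum>j=m+1..k-1. beta n m j * aterm n z j) = Q * z (k - 1)"
      using beta_PQ[of m "k-1" n z] m k2 unfolding Q_def by simp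
    have s: "(\<Sum>j=1..n-1. oel_c n m L U k j * aterm n z j)
        = (\<Sum>j=m+1..k-1. beta n m j * aterm n z j) + oel_c n m L U k k * aterm n z k"
    proof -
      have "(\<Sum>j=1..n-1. oel_c n m L U k j * aterm n z j) = (\<Sum>j=1..k. oel_c n m L U k j * aterm n z j)
         + (\<Sum>j=k+1..n-1. oel_c n m L U k j * aterm n z j)"
        using k2 by (intro sum_split_ivl) auto
      also have "(\<Sum>j=k+1..n-1. oel_c n m L U k j * aterm n z j) = 0"
        by (rule sum_zero_ivl) (use k2 m in \<open>auto simp add: oel_c_def\<close>)
      also have "(\<Sum>j=1..k. oel_c n m L U k j * aterm n z j) = (\<Sum>j=1..m. oel_c n m L U k j * aterm n z j)
         + (\<Sum>j=m+1..k. oel_c n m L U k j * aterm n z j)"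
        using k2 by (intro sum_split_ivl) auto
      also have "(\<Sum>j=1..m. oel_c n m L U k j * aterm n z j) = 0"
        by (rule sum_zero_ivl) (use k2 m in \<open>auto simp add: oel_c_def\<close>)
      also have "(\<Sum>j=m+1..k. oel_c n m L U k j * aterm n z j)
          = (\<Sum>j=m+1..k-1. oel_c n m L U k j * aterm n z j) + oel_c n m L U k k * aterm n z k"
      proof -
        have "k = Suc (k - 1)" using k2 by simp
        then have e: "{m+1..k} = insert k {m+1..k-1}" using k2 by auto
        have "k \<notin> {m+1..k-1}" using k2 by auto
        then show ?thesis unfolding e by (simp add: add.commute)
      qed
      also have "(\<Sum>j=m+1..k-1. oel_c n m L U k j * aterm n z j) = (\<Sum>j=m+1..k-1. beta n m j * aterm n z j)"
        by (intro sum.cong) (use k2 m in \<open>auto simp: oel_c_def\<close>)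
      finally show ?thesis by simp
    qed
    have kk: "\<not> (k \<le> k - 1)" using k2 by simp
    have ck: "oel_c n m L U k k = - Q / real n"
      unfolding oel_c_def Q_def using k2 m npos kk by (simp add: field_simps)
    have "- real m * z m + real n * oel_c n m L U k 0 + (\<Sum>j=1..n-1. oel_c n m L U k j * aterm n z j)
        = (- real m * z m + (\<Sum>j=m+1..k-1. beta n m j * aterm n z j)) + oel_c n m L U k k * aterm n z k"
      unfolding s using k2 m by (simp add: oel_c_def)
    also have "\<dots> = Q / real n * (real k * (z (k - 1) - z k))"
      unfolding P ck using npos by (simp add: aterm_def field_simps)
    finally show ?thesis using Z k2 m by simp
  next
    case kn
    define Q where "Q = real n * (\<Sum>j=m+1..n-1. beta n m j) - real m"
    have P: "- real m * z m + (\<Sum>j=m+1..n-1. beta n m j * aterm n z j) = Q * z (n - 1)"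
      using beta_PQ[of m "n-1" n z] m unfolding Q_def by simp
    have s: "(\<Sum>j=1..n-1. oel_c n m L U k j * aterm n z j) = (\<Sum>j=m+1..n-1. beta n m j * aterm n z j)"
    proof -
      have "(\<Sum>j=1..n-1. oel_c n m L U k j * aterm n z j) = (\<Sum>j=1..m. oel_c n m L U k j * aterm n z j)
         + (\<Sum>j=m+1..n-1. oel_c n m L U k j * aterm n z j)"
        using m by (intro sum_split_ivl) auto
      also have "(\<Sum>j=1..m. oel_c n m L U k j * aterm n z j) = 0"
        by (rule sum_zero_ivl) (use kn m n in \<open>simp add: oel_c_def\<close>)
      also have "(\<Sum>j=m+1..n-1. oel_c n m L U k j * aterm n z j) = (\<Sum>j=m+1..n-1. beta n m j * aterm n z j)"
        by (intro sum.cong) (use kn m n in \<open>auto simp: oel_c_def\<close>)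
      finally show ?thesis by simp
    qed
    have c0: "real n * oel_c n m L U k 0 = - L * Q"
    proof -
      have "\<not> (n \<le> n - 1)" "\<not> (n \<le> m)" "n \<noteq> 0" using n m by auto
      then show ?thesis unfolding oel_c_def Q_def using kn npos by (simp add: field_simps)
    qed
    have "- real m * z m + real n * oel_c n m L U k 0 + (\<Sum>j=1..n-1. oel_c n m L U k j * aterm n z j)
        = real n * oel_c n m L U k 0 + (- real m * z m + (\<Sum>j=m+1..n-1. beta n m j * aterm n z j))"
      unfolding s by simp
    also have "\<dots> = Q * (z (n - 1) - L)" unfolding P c0 by (simp add: algebra_simps)
    finally show ?thesis using Z kn n by simp
  qed
qed



definition lin :: "nat \<Rightarrow> nat \<Rightarrow> real \<Rightarrow> real \<Rightarrow> nat \<Rightarrow> real list \<Rightarrow> real" where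
  "lin n m L U k xs = oel_c n m L U k 0 + (\<Sum>j=1..n-1. oel_c n m L U k j * KL xs j)"

definition Sfun :: "nat \<Rightarrow> nat \<Rightarrow> real \<Rightarrow> real \<Rightarrow> nat \<Rightarrow> real list \<Rightarrow> real" where
  "Sfun n m L U k xs = (real n - 1) * topm m xs - (\<Sum>i<n. topm m (rem i xs))
     + (\<Sum>i<n. lin n m L U k (rem i xs))"

lemma lin_mset: "mset xs = mset ys \<Longrightarrow> lin n m L U k xs = lin n m L U k ys"
  unfolding lin_def by (simp add: KL_mset[of xs ys])

lemma sum_rem_mset:
  assumes mx: "mset xs = mset ys" and F: "\<And>a b. mset a = mset b \<Longrightarrow> F a = (F b :: real)"
  shows "(\<Sum>i<length xs. F (rem i xs)) = (\<Sum>i<length ys. F (rem i ys))"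
proof -
  obtain p where p: "p permutes {..<length ys}" "permute_list p ys = xs"
    using mset_eq_permutation[OF mx] by blast
  have len: "length xs = length ys" using mx by (metis size_mset)
  have "\<And>i. i < length ys \<Longrightarrow> F (rem i xs) = F (rem (p i) ys)"
  proof -
    fix i assume i: "i < length ys"
    have pi: "p i < length ys" using permutes_in_image[OF p(1), of i] i by simp
    have "xs ! i = ys ! p i" using p i permute_list_nth by metis
    then have "mset (rem i xs) = mset (rem (p i) ys)"
      using mset_rem[of i xs] mset_rem[of "p i" ys] i pi len mx by simp
    then show "F (rem i xs) = F (rem (p i) ys)" by (rule F)
  qed
  then have "(\<Sum>i<length xs. F (rem i xs)) = (\<Sum>i<length ys. F (rem (p i) ys))"
    using len by (intro sum.cong) auto
  also have "\<dots> = (\<Sum>i<length ys. F (rem i ys))"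
    using sum.permute[OF p(1), of "\<lambda>i. F (rem i ys)"] by (simp add: comp_def)
  finally show ?thesis .
qed

lemma Sfun_mset:
  assumes "mset xs = mset ys" "length xs = n"
  shows "Sfun n m L U k xs = Sfun n m L U k ys"
proof -
  have ly: "length ys = n" using assms by (metis size_mset)
  have "(\<Sum>i<n. topm m (rem i xs)) = (\<Sum>i<n. topm m (rem i ys))"
    using sum_rem_mset[OF assms(1), of "topm m"] topm_mset assms(2) ly by metis
  moreover have "(\<Sum>i<n. lin n m L U k (rem i xs)) = (\<Sum>i<n. lin n m L U k (rem i ys))"
    using sum_rem_mset[OF assms(1), of "lin n m L U k"] lin_mset assms(2) ly by metis
  moreover have "topm m xs = topm m ys" using topm_mset assms(1) by blast
  ultimately show ?thesis unfolding Sfun_def by simp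
qed

lemma KL_rem_desc:
  assumes d: "desc zs" and i: "i < length zs" and j: "1 \<le> j" "j \<le> length zs - 1"
  shows "KL (rem i zs) j = (if j \<le> i then zs ! (j - 1) else zs ! j)"
proof -
  have "KL (rem i zs) j = rem i zs ! (j - 1)" using KL_desc[OF desc_rem[OF d] j(1)] .
  also have "\<dots> = (if j \<le> i then zs ! (j - 1) else zs ! j)"
    using i j unfolding rem_def by (auto simp: nth_append min_def)
  finally show ?thesis .
qed

lemma sum_KL_rem:
  assumes d: "desc zs" and n: "length zs = n" and j: "1 \<le> j" "j \<le> n - 1"
  shows "(\<Sum>i<n. KL (rem i zs) j) = aterm n (nth zs) j"
proof -
  have "(\<Sum>i<n. KL (rem i zs) j) = (\<Sum>i<n. (if j \<le> i then zs ! (j - 1) else zs ! j))"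
    using KL_rem_desc[OF d _ j(1)] j n by (intro sum.cong) auto
  also have "\<dots> = (\<Sum>i\<in>{0..<j}. (if j \<le> i then zs ! (j - 1) else zs ! j))
      + (\<Sum>i\<in>{j..<n}. (if j \<le> i then zs ! (j - 1) else zs ! j))"
    unfolding atLeast0LessThan[symmetric] using j n by (intro sum.atLeastLessThan_concat[symmetric]) auto
  also have "\<dots> = (\<Sum>i\<in>{0..<j}. zs ! j) + (\<Sum>i\<in>{j..<n}. zs ! (j - 1))"
    by (intro arg_cong2[where f="(+)"] sum.cong) auto
  also have "\<dots> = aterm n (nth zs) j"
    unfolding aterm_def using j by (simp add: of_nat_diff algebra_simps)
  finally show ?thesis .
qed

lemma Sfun_desc:
  assumes d: "desc zs" and n: "length zs = n" "n \<ge> 2" and m: "1 \<le> m" "m \<le> n - 1"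
  shows "Sfun n m L U k zs = - real m * zs ! m + real n * oel_c n m L U k 0
     + (\<Sum>j=1..n-1. oel_c n m L U k j * aterm n (nth zs) j)"
proof -
  let ?z = "nth zs"
  have t1: "topm m zs = (\<Sum>j=1..m. ?z (j - 1))"
    unfolding topm_def using KL_desc[OF d] by simp
  have t2: "(\<Sum>i<n. topm m (rem i zs)) = (\<Sum>j=1..m. aterm n ?z j)"
    unfolding topm_def
    by (subst sum.swap) (use sum_KL_rem[OF d n(1)] m in auto)
  have t3: "(\<Sum>i<n. lin n m L U k (rem i zs)) = real n * oel_c n m L U k 0
      + (\<Sum>j=1..n-1. oel_c n m L U k j * aterm n ?z j)"
  proof -
    have "(\<Sum>i<n. lin n m L U k (rem i zs)) = (\<Sum>i<n. oel_c n m L U k 0)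
        + (\<Sum>i<n. \<Sum>j=1..n-1. oel_c n m L U k j * KL (rem i zs) j)"
      unfolding lin_def by (simp add: sum.distrib)
    also have "(\<Sum>i<n. \<Sum>j=1..n-1. oel_c n m L U k j * KL (rem i zs) j)
        = (\<Sum>j=1..n-1. oel_c n m L U k j * (\<Sum>i<n. KL (rem i zs) j))"
      by (subst sum.swap) (simp add: sum_distrib_left)
    also have "\<dots> = (\<Sum>j=1..n-1. oel_c n m L U k j * aterm n ?z j)"
      using sum_KL_rem[OF d n(1)] by (intro sum.cong) auto
    finally show ?thesis by simp
  qed
  have "Sfun n m L U k zs = ((real n - 1) * (\<Sum>j=1..m. ?z (j - 1)) - (\<Sum>j=1..m. aterm n ?z j))
      + (real n * oel_c n m L U k 0 + (\<Sum>j=1..n-1. oel_c n m L U k j * aterm n ?z j))"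
    unfolding Sfun_def t1 t2 t3 by simp
  also have "\<dots> = - real m * zs ! m + real n * oel_c n m L U k 0
     + (\<Sum>j=1..n-1. oel_c n m L U k j * aterm n (nth zs) j)"
    by (simp only: telescope)
  finally show ?thesis .
qed

lemma S_zero:
  assumes n: "n \<ge> 2" and m: "1 \<le> m" "m \<le> n - 1" and k: "k \<le> n" and len: "length xs = n"
    and Z: "(k = 0 \<longrightarrow> KL xs 1 = U) \<and> (k = n \<longrightarrow> KL xs n = L)
            \<and> (1 \<le> k \<and> k \<le> n - 1 \<longrightarrow> KL xs k = KL xs (k + 1))"
  shows "Sfun n m L U k xs = 0"
proof -
  define zs where "zs = rev (sort xs)"
  have d: "desc zs" unfolding desc_def zs_def by (simp add: sorted_wrt_rev)
  have ms: "mset zs = mset xs" by (simp add: zs_def)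
  have lz: "length zs = n" using len by (simp add: zs_def)
  have KLz: "\<And>j. 1 \<le> j \<Longrightarrow> KL xs j = zs ! (j - 1)"
    using KL_mset[OF ms] KL_desc[OF d] by metis
  have Zz: "(k = 0 \<longrightarrow> zs ! 0 = U) \<and> (k = n \<longrightarrow> zs ! (n - 1) = L) \<and> (1 \<le> k \<and> k \<le> n - 1 \<longrightarrow> zs ! (k - 1) = zs ! k)"
    using Z KLz[of 1] KLz[of n] KLz[of k] KLz[of "k+1"] n by auto
  have "Sfun n m L U k xs = Sfun n m L U k zs" using Sfun_mset[OF ms[symmetric] len] .
  also have "\<dots> = - real m * zs ! m + real n * oel_c n m L U k 0
     + (\<Sum>j=1..n-1. oel_c n m L U k j * aterm n (nth zs) j)"
    by (rule Sfun_desc[OF d lz n m])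
  also have "\<dots> = 0" by (rule S_zero_core[OF n m k Zz])
  finally show ?thesis .
qed



lemma val_sum: "finite S \<Longrightarrow> d \<subseteq> S \<Longrightarrow> (\<Sum>j\<in>S. val d j (\<theta> j)) = (\<Sum>j\<in>d. \<theta> j)"
proof -
  assume S: "finite S" "d \<subseteq> S"
  have "(\<Sum>j\<in>S. val d j (\<theta> j)) = (\<Sum>j\<in>S. if j \<in> d then \<theta> j else 0)"
    unfolding val_def by simp
  also have "\<dots> = (\<Sum>j\<in>S \<inter> d. \<theta> j)" using sum.inter_restrict[OF S(1), of \<theta> d] by simp
  also have "S \<inter> d = d" using S by auto
  finally show ?thesis .
qed

lemma Max_others:
  assumes i: "i < n" and m: "m \<le> n - 1"
  shows "Max ((\<lambda>d. \<Sum>j\<in>{0..<n}-{i}. val d j (\<theta> j)) ` {d \<in> decisions n m. i \<notin> d})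
       = topm m (rem i (map \<theta> [0..<n]))"
proof -
  define S where "S = {0..<n} - {i}"
  define is0 where "is0 = rem i [0..<n]"
  have dis: "distinct is0" unfolding is0_def using i by (simp add: rem_upt)
  have sS: "set is0 = S" unfolding is0_def S_def using i by (auto simp: rem_upt)
  have lis: "m \<le> length is0" unfolding is0_def using i m by (simp add: length_rem)
  have mp: "map \<theta> is0 = rem i (map \<theta> [0..<n])" unfolding is0_def by (simp add: rem_map)
  note T1 = TOP(1)[OF dis sS lis, of \<theta>] and T2 = TOP(2)[OF dis sS lis, of \<theta>]
  have D: "{d \<in> decisions n m. i \<notin> d} = {d. d \<subseteq> S \<and> card d = m}"
    unfolding decisions_def S_def by auto
  let ?F = "(\<lambda>d. \<Sum>j\<in>{0..<n}-{i}. val d j (\<theta> j))"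
  have F: "\<And>d. d \<subseteq> S \<Longrightarrow> ?F d = (\<Sum>j\<in>d. \<theta> j)"
    using val_sum[of S] unfolding S_def by auto
  have fin: "finite (?F ` {d \<in> decisions n m. i \<notin> d})"
  proof -
    have "{d \<in> decisions n m. i \<notin> d} \<subseteq> Pow {0..<n}" unfolding decisions_def by auto
    then show ?thesis by (meson finite_Pow_iff finite_atLeastLessThan finite_imageI finite_subset)
  qed
  have "Max (?F ` {d \<in> decisions n m. i \<notin> d}) = topm m (map \<theta> is0)"
  proof (rule Max_eqI[OF fin])
    fix y assume "y \<in> ?F ` {d \<in> decisions n m. i \<notin> d}"
    then obtain d where "d \<subseteq> S" "card d = m" "y = ?F d" unfolding D by auto
    then show "y \<le> topm m (map \<theta> is0)" using T1 F by auto
  next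
    obtain d where "d \<subseteq> S" "card d = m" "(\<Sum>j\<in>d. \<theta> j) = topm m (map \<theta> is0)" using T2 by blast
    then show "topm m (map \<theta> is0) \<in> ?F ` {d \<in> decisions n m. i \<notin> d}" unfolding D using F
      by (metis (mono_tags, lifting) image_eqI mem_Collect_eq)
  qed
  then show ?thesis using mp by simp
qed

lemma W_eq:
  assumes eff: "efficient n m L U f" and th: "\<theta> \<in> profiles n L U" and m: "m \<le> n"
  shows "(\<Sum>j<n. val (f \<theta>) j (\<theta> j)) = topm m (map \<theta> [0..<n])"
proof -
  have dis: "distinct [0..<n]" and sS: "set [0..<n] = {0..<n}" and lis: "m \<le> length [0..<n]"
    using m by auto
  note T1 = TOP(1)[OF dis sS lis, of \<theta>] and T2 = TOP(2)[OF dis sS lis, of \<theta>]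
  have fd: "f \<theta> \<in> decisions n m" and opt: "\<forall>d\<in>decisions n m. (\<Sum>j<n. val d j (\<theta> j)) \<le> (\<Sum>j<n. val (f \<theta>) j (\<theta> j))"
    using eff th unfolding efficient_def by auto
  have F: "\<And>d. d \<subseteq> {0..<n} \<Longrightarrow> (\<Sum>j<n. val d j (\<theta> j)) = (\<Sum>j\<in>d. \<theta> j)"
    using val_sum[of "{0..<n}"] by (simp add: atLeast0LessThan)
  have fs: "f \<theta> \<subseteq> {0..<n}" "card (f \<theta>) = m" using fd unfolding decisions_def by auto
  have le: "(\<Sum>j<n. val (f \<theta>) j (\<theta> j)) \<le> topm m (map \<theta> [0..<n])"
    using T1 fs F by auto
  obtain d where d: "d \<subseteq> {0..<n}" "card d = m" "(\<Sum>j\<in>d. \<theta> j) = topm m (map \<theta> [0..<n])"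
    using T2 by blast
  have "d \<in> decisions n m" using d unfolding decisions_def by auto
  then have "topm m (map \<theta> [0..<n]) \<le> (\<Sum>j<n. val (f \<theta>) j (\<theta> j))"
    using opt d F by metis
  then show ?thesis using le by simp
qed

lemma sum_minus_one:
  fixes v :: "nat \<Rightarrow> real"
  shows "(\<Sum>i<n. \<Sum>j\<in>{0..<n}-{i}. v j) = (real n - 1) * (\<Sum>j<n. v j)"
proof -
  have "(\<Sum>i<n. \<Sum>j\<in>{0..<n}-{i}. v j) = (\<Sum>i<n. (\<Sum>j<n. v j) - v i)"
    by (intro sum.cong) (auto simp: sum_diff1 atLeast0LessThan)
  also have "\<dots> = real n * (\<Sum>j<n. v j) - (\<Sum>j<n. v j)" by (simp add: sum_subtractf)
  finally show ?thesis by (simp add: algebra_simps)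
qed

lemma oel_tax_eq:
  assumes i: "i < n" and m: "m \<le> n - 1"
  shows "oel_tax n m L U k f i \<theta> = (\<Sum>j\<in>{0..<n}-{i}. val (f \<theta>) j (\<theta> j))
     - topm m (rem i (map \<theta> [0..<n])) + lin n m L U k (rem i (map \<theta> [0..<n]))"
  unfolding oel_tax_def vcg_tax_def lin_def Max_others[OF i m] kth_largest_KL[OF i] by simp

lemma O_sum:
  assumes eff: "efficient n m L U f" and th: "\<theta> \<in> profiles n L U" and m: "m \<le> n - 1"
  shows "(\<Sum>i<n. oel_tax n m L U k f i \<theta>) = Sfun n m L U k (map \<theta> [0..<n])"
proof -
  have "(\<Sum>i<n. oel_tax n m L U k f i \<theta>) = (\<Sum>i<n. (\<Sum>j\<in>{0..<n}-{i}. val (f \<theta>) j (\<theta> j))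
     - topm m (rem i (map \<theta> [0..<n])) + lin n m L U k (rem i (map \<theta> [0..<n])))"
    using oel_tax_eq m by (intro sum.cong) auto
  also have "\<dots> = (real n - 1) * (\<Sum>j<n. val (f \<theta>) j (\<theta> j))
     - (\<Sum>i<n. topm m (rem i (map \<theta> [0..<n]))) + (\<Sum>i<n. lin n m L U k (rem i (map \<theta> [0..<n])))"
    by (simp add: sum.distrib sum_subtractf sum_minus_one)
  also have "\<dots> = Sfun n m L U k (map \<theta> [0..<n])"
    unfolding Sfun_def W_eq[OF eff th] using m by (simp add: W_eq[OF eff th])
  finally show ?thesis .
qed

lemma GmO:
  assumes m: "m \<le> n - 1"
  shows "(\<Sum>i<n. groves_tax n f (\<lambda>_. h) i \<theta>) - (\<Sum>i<n. oel_tax n m L U k f i \<theta>)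
     = (\<Sum>i<n. h (vec (rem i (map \<theta> [0..<n]))) + topm m (rem i (map \<theta> [0..<n]))
          - lin n m L U k (rem i (map \<theta> [0..<n])))"
proof -
  have "(\<Sum>i<n. groves_tax n f (\<lambda>_. h) i \<theta>) - (\<Sum>i<n. oel_tax n m L U k f i \<theta>)
      = (\<Sum>i<n. groves_tax n f (\<lambda>_. h) i \<theta> - oel_tax n m L U k f i \<theta>)"
    by (simp add: sum_subtractf)
  also have "\<dots> = (\<Sum>i<n. h (vec (rem i (map \<theta> [0..<n]))) + topm m (rem i (map \<theta> [0..<n]))
          - lin n m L U k (rem i (map \<theta> [0..<n])))"
    using m by (intro sum.cong) (auto simp: oel_tax_eq groves_tax_def others_vec)
  finally show ?thesis .
qed



lemma len_filter_update:
  "i < length xs \<Longrightarrow> length (filter P (xs[i := v])) + (if P (xs ! i) then 1 else 0)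
     = length (filter P xs) + (if P v then 1 else 0)"
proof (induction xs arbitrary: i)
  case Nil thus ?case by simp
next
  case (Cons a xs)
  show ?case
  proof (cases i)
    case 0 thus ?thesis by simp
  next
    case (Suc j)
    with Cons.prems have "j < length xs" by simp
    from Cons.IH[OF this] Suc show ?thesis by simp
  qed
qed

lemma mset_rem_snoc:
  assumes i: "i < length ys"
  shows "mset (rem i (ys @ [p])) = mset (ys[i := p])"
proof -
  have "mset (rem i (ys @ [p])) = add_mset p (mset ys) - {#ys ! i#}"
    using mset_rem[of i "ys @ [p]"] i by (simp add: nth_append)
  also have "\<dots> = add_mset p (mset ys - {#ys ! i#})"
  proof -
    have "ys ! i \<in># mset ys" using i by simp
    then obtain M where M: "mset ys = add_mset (ys ! i) M" by (metis insert_DiffM)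
    show ?thesis unfolding M by (simp add: add_mset_commute)
  qed
  also have "\<dots> = mset (ys[i := p])" using mset_update[OF i] by simp
  finally show ?thesis .
qed

lemma rem_last: "length ys = N \<Longrightarrow> rem N (ys @ [p]) = ys"
  unfolding rem_def by simp

theorem lemma2:
  fixes n m k :: nat and L U :: real
    and f :: "(nat \<Rightarrow> real) \<Rightarrow> nat set"
    and h :: "(nat \<Rightarrow> real) \<Rightarrow> real"
  assumes "n \<ge> 2" and "1 \<le> m" and "m \<le> n - 1" and "L < U"
    and "k \<le> n" and "odd (int k - int m)"
    and "efficient n m L U f"
    and "symmetric_fn n L U h"
    and "feasible n L U (groves_tax n f (\<lambda>_. h))"
  shows "\<not> welfare_dominates n L U (groves_tax n f (\<lambda>_. h)) (oel_tax n m L U k f)"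
proof
  assume dom: "welfare_dominates n L U (groves_tax n f (\<lambda>_. h)) (oel_tax n m L U k f)"
  note n = assms(1) and m = assms(2,3) and LU = assms(4) and k = assms(5)
    and eff = assms(7) and sym = assms(8) and feas = assms(9)
  define Gs where "Gs \<theta> = (\<Sum>i<n. groves_tax n f (\<lambda>_. h) i \<theta>)" for \<theta>
  define Os where "Os \<theta> = (\<Sum>i<n. oel_tax n m L U k f i \<theta>)" for \<theta>
  have dom1: "\<And>\<theta>. \<theta> \<in> profiles n L U \<Longrightarrow> Os \<theta> \<le> Gs \<theta>" and
       dom2: "\<exists>\<theta>\<in>profiles n L U. Os \<theta> < Gs \<theta>"
    using dom unfolding welfare_dominates_def Gs_def Os_def by auto
  have feas1: "\<And>\<theta>. \<theta> \<in> profiles n L U \<Longrightarrow> Gs \<theta> \<le> 0"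
    using feas unfolding feasible_def Gs_def by auto
  define ee where "ee xs = h (vec xs) + topm m xs - lin n m L U k xs" for xs
  have GO: "\<And>\<theta>. Gs \<theta> - Os \<theta> = (\<Sum>i<n. ee (rem i (map \<theta> [0..<n])))"
    unfolding Gs_def Os_def ee_def using GmO[OF m(2)] by simp
  have ee_mset: "ee xs = ee ys" if xs: "length xs = n - 1" "set xs \<subseteq> {L..U}" and ms: "mset xs = mset ys" for xs ys
  proof -
    obtain p where p: "p permutes {..<length xs}" "permute_list p xs = ys"
      using mset_eq_permutation[OF ms[symmetric]] by blast
    have ly: "length ys = length xs" using ms by (metis size_mset)
    have vp: "vec ys = vec xs \<circ> p"
    proof
      fix j
      show "vec ys j = (vec xs \<circ> p) j"
      proof (cases "j < length xs")
        case True
        then have "p j < length xs" using permutes_in_image[OF p(1), of j] by simp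
        then show ?thesis using True p ly permute_list_nth[OF p(1) True] by (simp add: vec_def)
      next
        case False
        then have "p j = j" using p(1) by (simp add: permutes_not_in)
        then show ?thesis using False ly by (simp add: vec_def)
      qed
    qed
    have inr: "\<forall>j<n-1. vec xs j \<in> {L..U}" using xs nth_mem[of _ xs] by (auto simp: vec_def subset_iff)
    have pp: "p permutes {0..<n-1}" using p(1) xs by (simp add: atLeast0LessThan)
    have "h (vec xs \<circ> p) = h (vec xs)" using sym inr pp unfolding symmetric_fn_def by blast
    then have "h (vec ys) = h (vec xs)" using vp by simp
    moreover have "topm m xs = topm m ys" by (rule topm_mset[OF ms])
    moreover have "lin n m L U k xs = lin n m L U k ys" by (rule lin_mset[OF ms])
    ultimately show ?thesis unfolding ee_def by simp
  qed
  define piv where "piv ys = (if k = 0 then U else if k = n then L else KL ys k)" for ys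
  have main: "\<forall>ys. length ys = n - 1 \<longrightarrow> set ys \<subseteq> {L..U} \<longrightarrow> ee ys = 0"
  proof (intro allI)
    fix ys
    show "length ys = n - 1 \<longrightarrow> set ys \<subseteq> {L..U} \<longrightarrow> ee ys = 0"
    proof (induction ys rule: measure_induct_rule[of "\<lambda>ys. length (filter (\<lambda>x. x \<noteq> piv ys) ys)"])
      case (less ys)
      show ?case
      proof (intro impI)
        assume ly: "length ys = n - 1" and sy: "set ys \<subseteq> {L..U}"
        define p where "p = piv ys"
        have pr: "p \<in> {L..U}"
        proof (cases "k = 0 \<or> k = n")
          case True then show ?thesis using LU by (auto simp: p_def piv_def)
        next
          case False
          then have "KL ys k \<in> set ys" using k ly by (intro KL_in) auto
          then show ?thesis using False sy by (auto simp: p_def piv_def)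
        qed
        define \<theta> where "\<theta> = vec (ys @ [p])"
        have lys: "length (ys @ [p]) = n" using ly n by simp
        have mt: "map \<theta> [0..<n] = ys @ [p]" unfolding \<theta>_def using map_vec[of "ys @ [p]"] unfolding lys .
        have th: "\<theta> \<in> profiles n L U"
          unfolding profiles_def \<theta>_def vec_def using sy pr lys
          by (auto simp: nth_append subset_iff)
        have Z: "(k = 0 \<longrightarrow> KL (ys @ [p]) 1 = U) \<and> (k = n \<longrightarrow> KL (ys @ [p]) n = L)
            \<and> (1 \<le> k \<and> k \<le> n - 1 \<longrightarrow> KL (ys @ [p]) k = KL (ys @ [p]) (k + 1))"
        proof (intro conjI impI)
          assume k0: "k = 0"
          then have pU: "p = U" by (simp add: p_def piv_def)
          have "filter (\<lambda>x. U < x) (ys @ [p]) = []" using sy pU by (auto simp: filter_empty_conv)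
          moreover have "1 \<le> length (filter (\<lambda>x. U \<le> x) (ys @ [p]))" using pU by simp
          ultimately show "KL (ys @ [p]) 1 = U" using lys n by (intro KL_uniq) auto
        next
          assume kn: "k = n"
          then have pL: "p = L" using n by (simp add: p_def piv_def)
          have "length (filter (\<lambda>x. L < x) (ys @ [p])) = length (filter (\<lambda>x. L < x) ys)" using pL by simp
          also have "\<dots> \<le> n - 1" using ly length_filter_le[of "\<lambda>x. L < x" ys] by simp
          finally have a: "length (filter (\<lambda>x. L < x) (ys @ [p])) < n" using n by simp
          have "filter (\<lambda>x. L \<le> x) (ys @ [p]) = ys @ [p]" using sy pL by (auto simp: subset_iff)
          then have b: "n \<le> length (filter (\<lambda>x. L \<le> x) (ys @ [p]))" using lys by simp
          show "KL (ys @ [p]) n = L" using lys n a b by (intro KL_uniq) auto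
        next
          assume km: "1 \<le> k \<and> k \<le> n - 1"
          then have pK: "p = KL ys k" using n by (auto simp: p_def piv_def)
          have P: "length (filter (\<lambda>x. p < x) ys) < k \<and> k \<le> length (filter (\<lambda>x. p \<le> x) ys)"
            using KL_props[of k ys] km ly pK by simp
          have a: "length (filter (\<lambda>x. p < x) (ys @ [p])) = length (filter (\<lambda>x. p < x) ys)" by simp
          have b: "length (filter (\<lambda>x. p \<le> x) (ys @ [p])) = length (filter (\<lambda>x. p \<le> x) ys) + 1" by simp
          have "KL (ys @ [p]) k = p" using km lys P a b by (intro KL_uniq) auto
          moreover have "KL (ys @ [p]) (k + 1) = p" using km lys P a b by (intro KL_uniq) auto
          ultimately show "KL (ys @ [p]) k = KL (ys @ [p]) (k + 1)" by simp
        qed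
        have "Os \<theta> = 0" unfolding Os_def O_sum[OF eff th m(2)] mt
          by (rule S_zero[OF n m k lys Z])
        then have "Gs \<theta> - Os \<theta> = 0" using dom1[OF th] feas1[OF th] by simp
        then have sum0: "(\<Sum>i<n. ee (rem i (ys @ [p]))) = 0" using GO[of \<theta>] mt by simp
        have nn: "n = Suc (n - 1)" using n by simp
        have "(\<Sum>i<n. ee (rem i (ys @ [p]))) = (\<Sum>i<n-1. ee (rem i (ys @ [p]))) + ee (rem (n-1) (ys @ [p]))"
          by (subst nn) (simp only: sum.lessThan_Suc)
        also have "ee (rem (n-1) (ys @ [p])) = ee ys" using rem_last[OF ly] by simp
        also have "(\<Sum>i<n-1. ee (rem i (ys @ [p]))) = (\<Sum>i<n-1. if ys ! i = p then ee ys else 0)"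
        proof (intro sum.cong refl)
          fix i assume "i \<in> {..<n-1}"
          then have i: "i < length ys" using ly by simp
          define ys' where "ys' = ys[i := p]"
          have ly': "length ys' = n - 1" using ly by (simp add: ys'_def)
          have sy': "set ys' \<subseteq> {L..U}" unfolding ys'_def
            using set_update_subset_insert[of ys i p] sy pr by auto
          have e1: "ee (rem i (ys @ [p])) = ee ys'"
          proof -
            have "mset ys' = mset (rem i (ys @ [p]))" using mset_rem_snoc[OF i, of p] by (simp add: ys'_def)
            from ee_mset[OF ly' sy' this] show ?thesis by simp
          qed
          show "ee (rem i (ys @ [p])) = (if ys ! i = p then ee ys else 0)"
          proof (cases "ys ! i = p")
            case True
            then have "ys' = ys" unfolding ys'_def by (metis list_update_id)
            then show ?thesis using e1 True by simp
          next
            case False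
            have pv: "piv ys' = p"
            proof (cases "k = 0 \<or> k = n")
              case True then show ?thesis by (auto simp: p_def piv_def)
            next
              case kF: False
              then have km: "1 \<le> k" "k \<le> n - 1" using k by auto
              have pK: "p = KL ys k" using kF by (simp add: p_def piv_def)
              have P: "length (filter (\<lambda>x. p < x) ys) < k \<and> k \<le> length (filter (\<lambda>x. p \<le> x) ys)"
                using KL_props[of k ys] km ly pK by simp
              have a: "length (filter (\<lambda>x. p < x) ys') \<le> length (filter (\<lambda>x. p < x) ys)"
                using len_filter_update[OF i, of "\<lambda>x. p < x" p] unfolding ys'_def by (auto split: if_splits)
              have b: "length (filter (\<lambda>x. p \<le> x) ys) \<le> length (filter (\<lambda>x. p \<le> x) ys')"
                using len_filter_update[OF i, of "\<lambda>x. p \<le> x" p] unfolding ys'_def by (auto split: if_splits)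
              have "KL ys' k = p" using km ly' P a b by (intro KL_uniq) auto
              then show ?thesis using kF by (simp add: piv_def)
            qed
            have "length (filter (\<lambda>x. x \<noteq> p) ys') + 1 = length (filter (\<lambda>x. x \<noteq> p) ys)"
              using len_filter_update[OF i, of "\<lambda>x. x \<noteq> p" p] False unfolding ys'_def by simp
            then have lt: "length (filter (\<lambda>x. x \<noteq> piv ys') ys') < length (filter (\<lambda>x. x \<noteq> piv ys) ys)"
              using pv by (simp add: p_def)
            have "ee ys' = 0" using less[OF lt] ly' sy' by simp
            then show ?thesis using e1 False by simp
          qed
        qed
        finally have "ee ys + (\<Sum>i<n-1. if ys ! i = p then ee ys else 0) = 0" using sum0 by simp
        moreover have "(\<Sum>i<n-1. if ys ! i = p then ee ys else 0) = ee ys * (\<Sum>i<n-1. if ys ! i = p then 1 else 0)"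
          by (simp add: sum_distrib_left if_distrib cong: if_cong)
        ultimately have "ee ys * (1 + (\<Sum>i<n-1. if ys ! i = p then 1 else (0::real))) = 0"
          by (simp add: algebra_simps)
        moreover have "(\<Sum>i<n-1. if ys ! i = p then 1 else (0::real)) \<ge> 0" by (intro sum_nonneg) auto
        moreover have "ee ys * (1 + (\<Sum>i<n-1. if ys ! i = p then 1 else (0::real))) = 0 \<Longrightarrow> (\<Sum>i<n-1. if ys ! i = p then 1 else (0::real)) \<ge> 0 \<Longrightarrow> ee ys = 0"
          by (simp add: mult_eq_0_iff)
        ultimately show "ee ys = 0" by blast
      qed
    qed
  qed
  obtain \<theta> where th: "\<theta> \<in> profiles n L U" and lt: "Os \<theta> < Gs \<theta>" using dom2 by blast
  have "\<And>i. i < n \<Longrightarrow> ee (rem i (map \<theta> [0..<n])) = 0"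
  proof -
    fix i assume i: "i < n"
    have "length (rem i (map \<theta> [0..<n])) = n - 1" using i by (simp add: length_rem)
    moreover have "set (rem i (map \<theta> [0..<n])) \<subseteq> {L..U}"
    proof -
      have "set (rem i (map \<theta> [0..<n])) \<subseteq> set (map \<theta> [0..<n])" unfolding rem_def
        by (auto dest: in_set_takeD in_set_dropD)
      also have "\<dots> \<subseteq> {L..U}" using th unfolding profiles_def by auto
      finally show ?thesis .
    qed
    ultimately show "ee (rem i (map \<theta> [0..<n])) = 0" using main by blast
  qed
  then have "Gs \<theta> - Os \<theta> = 0" unfolding GO by simp
  then show False using lt by simp
qed


end
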